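(* Let $\mathbb{K}$ be a field, $R=\mathbb{K}[X_1,\ldots,X_n]$, $J\subsetneq I\subset R$ monomial ideals, and $k\in\mathbb{N}$. Let $I'$ and $J'$ be the monomial ideals obtained from $I$ and $J$ as follows: each minimal monomial generator whose degree in $X_n$ is at least $k$ is multiplied by $X_n$, and all other minimal generators are kept unchanged. Then $\operatorname{sdepth} I/J=\operatorname{sdepth} I'/J'$.
   Context: Stanley depth: with the fine multigrading, a Stanley decomposition of a finitely generated multigraded module $M$ is a finite family $(\mathbb{K}[Z_i], m_i)$ with $m_i$ homogeneous, $Z_i$ subsets of the variables, $m_i\mathbb{K}[Z_i]$ free over $\mathbb{K}[Z_i]$, and $M=\bigoplus_i m_i\mathbb{K}[Z_i]$ as multigraded $\mathbb{K}$-vector spaces; its depth is $\min_i|Z_i|$, and $\operatorname{sdepth}M$ is the maximal depth of a Stanley decomposition. *)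

theory Defs
  imports Main
begin

text \<open>Monomials of K[X_1,...,X_n] are represented by exponent vectors
  a :: nat => nat with a i = 0 for i >= n (variable X_(i+1) has index i).
  Divisibility of monomials is the pointwise order on exponent vectors.\<close>

definition monomials :: "nat \<Rightarrow> (nat \<Rightarrow> nat) set" where
  "monomials n = {a. \<forall>i\<ge>n. a i = 0}"

text \<open>A monomial ideal is identified with the set of monomials it contains
  (which is a K-basis of it): an upward closed set of monomials.\<close>

definition monomial_ideal :: "nat \<Rightarrow> (nat \<Rightarrow> nat) set \<Rightarrow> bool" where
  "monomial_ideal n I \<longleftrightarrow> I \<subseteq> monomials n \<and>
     (\<forall>a\<in>I. \<forall>b\<in>monomials n. a \<le> b \<longrightarrow> b \<in> I)"

definition mon_ideal_gen :: "nat \<Rightarrow> (nat \<Rightarrow> nat) set \<Rightarrow> (nat \<Rightarrow> nat) set" where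
  "mon_ideal_gen n G = {b \<in> monomials n. \<exists>g\<in>G. g \<le> b}"

definition min_gens :: "(nat \<Rightarrow> nat) set \<Rightarrow> (nat \<Rightarrow> nat) set" where
  "min_gens I = {a \<in> I. \<forall>b\<in>I. b \<le> a \<longrightarrow> b = a}"

definition shift_gen :: "nat \<Rightarrow> nat \<Rightarrow> (nat \<Rightarrow> nat) \<Rightarrow> (nat \<Rightarrow> nat)" where
  "shift_gen n k a = (if k \<le> a (n - 1) then a(n - 1 := Suc (a (n - 1))) else a)"

definition shift_ideal :: "nat \<Rightarrow> nat \<Rightarrow> (nat \<Rightarrow> nat) set \<Rightarrow> (nat \<Rightarrow> nat) set" where
  "shift_ideal n k I = mon_ideal_gen n (shift_gen n k ` min_gens I)"

text \<open>Stanley space m K[Z]: its monomials are m * (monomials in the variables Z).\<close>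

definition cone :: "nat \<Rightarrow> (nat \<Rightarrow> nat) \<Rightarrow> nat set \<Rightarrow> (nat \<Rightarrow> nat) set" where
  "cone n m Z = {a \<in> monomials n. m \<le> a \<and> (\<forall>i. i \<notin> Z \<longrightarrow> a i = m i)}"

text \<open>Stanley decomposition of I/J (J \<subseteq> I monomial ideals) with the fine multigrading:
  every homogeneous element of I/J is a scalar multiple of a monomial in I - J;
  m K[Z] is free over K[Z] iff no monomial of m K[Z] lies in J; the direct sum
  decomposition as multigraded vector spaces means the cones partition I - J.\<close>

definition stanley_decomp ::
  "nat \<Rightarrow> (nat \<Rightarrow> nat) set \<Rightarrow> (nat \<Rightarrow> nat) set \<Rightarrow> ((nat \<Rightarrow> nat) \<times> nat set) set \<Rightarrow> bool" where
  "stanley_decomp n I J D \<longleftrightarrow> finite D \<and>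
     (\<forall>(m, Z)\<in>D. Z \<subseteq> {..<n} \<and> m \<in> I - J \<and> cone n m Z \<subseteq> I - J) \<and>
     (\<forall>a\<in>I - J. \<exists>!p\<in>D. a \<in> cone n (fst p) (snd p))"

definition stanley_depth_of :: "((nat \<Rightarrow> nat) \<times> nat set) set \<Rightarrow> nat" where
  "stanley_depth_of D = Min ((\<lambda>p. card (snd p)) ` D)"

definition sdepth :: "nat \<Rightarrow> (nat \<Rightarrow> nat) set \<Rightarrow> (nat \<Rightarrow> nat) set \<Rightarrow> nat" where
  "sdepth n I J = Max {stanley_depth_of D | D. stanley_decomp n I J D}"

end

theory Submission
  imports Defs
begin

lemma sum_less_mono:
  assumes "a \<in> monomials n" "b \<in> monomials n" "b \<le> a" "b \<noteq> a"
  shows "(\<Sum>i<n. b i) < (\<Sum>i<n. a i)"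
proof -
  obtain j where j: "b j \<noteq> a j" using assms(4) by blast
  have "j < n"
  proof (rule ccontr)
    assume "\<not> j < n" then show False using j assms(1,2) by (auto simp: monomials_def)
  qed
  have "b j < a j" using j assms(3) by (simp add: le_fun_def order_le_neq_trans)
  show ?thesis
    apply (rule sum_strict_mono_ex1)
    using assms(3) \<open>j < n\<close> \<open>b j < a j\<close> by (auto simp: le_fun_def)
qed

lemma exists_min_gen:
  assumes I: "monomial_ideal n I"
  shows "a \<in> I \<Longrightarrow> \<exists>g\<in>min_gens I. g \<le> a"
proof (induction "\<Sum>i<n. a i" arbitrary: a rule: less_induct)
  case less
  show ?case
  proof (cases "a \<in> min_gens I")
    case True then show ?thesis by blast
  next
    case False
    then obtain b where b: "b \<in> I" "b \<le> a" "b \<noteq> a" using less.prems by (auto simp: min_gens_def)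
    have "(\<Sum>i<n. b i) < (\<Sum>i<n. a i)"
      using sum_less_mono b less.prems I by (auto simp: monomial_ideal_def)
    then obtain g where "g \<in> min_gens I" "g \<le> b" using less.hyps b(1) by blast
    then show ?thesis using b(2) order_trans by blast
  qed
qed

lemma min_gens_sub: "min_gens I \<subseteq> I" by (auto simp: min_gens_def)

definition gdown :: "nat \<Rightarrow> nat \<Rightarrow> nat" where
  "gdown k t = (if t < k then t else t - 1)"
definition qd :: "nat \<Rightarrow> nat \<Rightarrow> bool" where
  "qd k t = (0 < k \<or> 0 < t)"
definition gup :: "nat \<Rightarrow> nat \<Rightarrow> nat" where
  "gup k t = (if t < k then t else t + 1)"

lemma upd_mon: "e < n \<Longrightarrow> a \<in> monomials n \<Longrightarrow> a(e := v) \<in> monomials n"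
  by (auto simp: monomials_def)

lemma char1:
  assumes I: "monomial_ideal n I" and n: "n \<ge> 1" and a: "a \<in> monomials n"
  shows "a \<in> shift_ideal n k I \<longleftrightarrow>
     qd k (a (n - 1)) \<and> a(n - 1 := gdown k (a (n - 1))) \<in> I"
proof
  let ?e = "n - 1"
  have e: "?e < n" using n by simp
  assume "a \<in> shift_ideal n k I"
  then obtain g where g: "g \<in> min_gens I" "shift_gen n k g \<le> a"
    by (auto simp: shift_ideal_def mon_ideal_gen_def)
  have gI: "g \<in> I" using g(1) min_gens_sub by blast
  have le1: "g i \<le> a i" if "i \<noteq> ?e" for i
    using g(2) that by (auto simp: le_fun_def shift_gen_def split: if_splits)
  have q: "qd k (a ?e) \<and> g ?e \<le> gdown k (a ?e)"
  proof (cases "k \<le> g ?e")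
    case True
    then have "Suc (g ?e) \<le> a ?e" using g(2) by (auto simp: le_fun_def shift_gen_def dest: spec[of _ ?e])
    then show ?thesis using True by (auto simp: qd_def gdown_def)
  next
    case False
    then have "g ?e \<le> a ?e" using g(2) by (auto simp: le_fun_def shift_gen_def dest: spec[of _ ?e])
    then show ?thesis using False by (auto simp: qd_def gdown_def)
  qed
  have "g \<le> a(?e := gdown k (a ?e))" using le1 q by (auto simp: le_fun_def)
  then show "qd k (a ?e) \<and> a(?e := gdown k (a ?e)) \<in> I"
    using q I gI upd_mon[OF e a] by (auto simp: monomial_ideal_def)
next
  let ?e = "n - 1"
  assume h: "qd k (a ?e) \<and> a(?e := gdown k (a ?e)) \<in> I"
  then obtain g where g: "g \<in> min_gens I" "g \<le> a(?e := gdown k (a ?e))"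
    using exists_min_gen[OF I] by blast
  have "shift_gen n k g \<le> a"
    unfolding le_fun_def
  proof
    fix i
    show "shift_gen n k g i \<le> a i"
    proof (cases "i = ?e")
      case False then show ?thesis using g(2) by (auto simp: le_fun_def shift_gen_def dest: spec[of _ i])
    next
      case True
      have ge: "g ?e \<le> gdown k (a ?e)" using g(2) by (auto simp: le_fun_def dest: spec[of _ ?e])
      show ?thesis using True ge h by (auto simp: shift_gen_def gdown_def qd_def split: if_splits)
    qed
  qed
  then have "\<exists>h\<in>shift_gen n k ` min_gens I. h \<le> a" using g(1) by blast
  then show "a \<in> shift_ideal n k I" using a unfolding shift_ideal_def mon_ideal_gen_def by blast
qed

lemma char2:
  assumes I: "monomial_ideal n I" and n: "n \<ge> 1" and a: "a \<in> monomials n"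
  shows "a \<in> I \<longleftrightarrow> a(n - 1 := gup k (a (n - 1))) \<in> shift_ideal n k I"
proof -
  have e: "n - 1 < n" using n by simp
  have "a(n - 1 := gup k (a (n - 1))) \<in> shift_ideal n k I \<longleftrightarrow>
     qd k (gup k (a (n - 1))) \<and> a(n - 1 := gdown k (gup k (a (n - 1)))) \<in> I"
    using char1[OF I n upd_mon[OF e a]] by simp
  also have "\<dots> \<longleftrightarrow> a \<in> I" by (simp add: gup_def gdown_def qd_def)
  finally show ?thesis by simp
qed

lemma cone_upd:
  assumes "e < n" "a \<in> monomials n"
  shows "a(e := v) \<in> cone n m Z \<longleftrightarrow>
    (\<forall>i. i \<noteq> e \<longrightarrow> m i \<le> a i \<and> (i \<notin> Z \<longrightarrow> a i = m i)) \<and> m e \<le> v \<and> (e \<notin> Z \<longrightarrow> v = m e)"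
  using upd_mon[OF assms] unfolding cone_def le_fun_def
  by (auto split: if_splits)

lemma cone_upd2:
  shows "a \<in> cone n (m(e := t)) Z \<longleftrightarrow> a \<in> monomials n \<and>
    (\<forall>i. i \<noteq> e \<longrightarrow> m i \<le> a i \<and> (i \<notin> Z \<longrightarrow> a i = m i)) \<and> t \<le> a e \<and> (e \<notin> Z \<longrightarrow> a e = t)"
  unfolding cone_def le_fun_def
  by (auto split: if_splits)

lemma ex1_uniq: "\<exists>!x\<in>A. P x \<Longrightarrow> x \<in> A \<Longrightarrow> P x \<Longrightarrow> y \<in> A \<Longrightarrow> P y \<Longrightarrow> x = y"
  by blast

lemma transfer:
  assumes e: "e < n"
    and IB: "IB \<subseteq> monomials n"
    and HS: "IA - JA = {a \<in> monomials n. q (a e) \<and> a(e := g (a e)) \<in> IB - JB}"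
    and ne: "IA - JA \<noteq> {}"
    and Hup: "\<And>s. \<exists>t. \<forall>x. (q x \<and> s \<le> g x) \<longleftrightarrow> t \<le> x"
    and Hfin: "\<And>s. finite {x. q x \<and> g x = s}"
    and D: "stanley_decomp n IB JB D"
  shows "\<exists>D'. stanley_decomp n IA JA D' \<and> stanley_depth_of D \<le> stanley_depth_of D'"
proof -
  define ts where "ts s = (SOME t. \<forall>x. (q x \<and> s \<le> g x) \<longleftrightarrow> t \<le> x)" for s
  have ts: "(q x \<and> s \<le> g x) \<longleftrightarrow> ts s \<le> x" for s x
    using someI_ex[OF Hup[of s]] unfolding ts_def by blast
  define M where "M p = (if e \<in> snd p then {(fst p)(e := ts (fst p e))}
      else (\<lambda>t. (fst p)(e := t)) ` {x. q x \<and> g x = fst p e})" for p :: "(nat \<Rightarrow> nat) \<times> nat set"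
  define D' where "D' = (\<Union>p\<in>D. (\<lambda>m'. (m', snd p)) ` M p)"
  have finM: "finite (M p)" for p using Hfin by (auto simp: M_def)
  have Mform: "m' \<in> M (m, Z) \<Longrightarrow> \<exists>t. m' = m(e := t)" for m' m Z
    by (auto simp: M_def split: if_splits)
  have key: "(q (a e) \<and> a(e := g (a e)) \<in> cone n m Z) \<longleftrightarrow> (\<exists>m'\<in>M (m, Z). a \<in> cone n m' Z)"
    if a: "a \<in> monomials n" for m Z a
  proof -
    let ?R = "\<forall>i. i \<noteq> e \<longrightarrow> m i \<le> a i \<and> (i \<notin> Z \<longrightarrow> a i = m i)"
    have L: "(q (a e) \<and> a(e := g (a e)) \<in> cone n m Z) \<longleftrightarrow>
        q (a e) \<and> ?R \<and> m e \<le> g (a e) \<and> (e \<notin> Z \<longrightarrow> g (a e) = m e)"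
      using cone_upd[OF e a, of "g (a e)" m Z] by blast
    show ?thesis
    proof (cases "e \<in> Z")
      case True
      have tt: "(q (a e) \<and> m e \<le> g (a e)) \<longleftrightarrow> ts (m e) \<le> a e" by (rule ts)
      have "(\<exists>m'\<in>M (m, Z). a \<in> cone n m' Z) \<longleftrightarrow> a \<in> cone n (m(e := ts (m e))) Z"
        using True by (simp add: M_def)
      also have "\<dots> \<longleftrightarrow> ?R \<and> ts (m e) \<le> a e"
        using cone_upd2[of a n m e "ts (m e)" Z] True a by blast
      finally show ?thesis using L tt True by blast
    next
      case False
      have "(\<exists>m'\<in>M (m, Z). a \<in> cone n m' Z) \<longleftrightarrow>
          (\<exists>t. q t \<and> g t = m e \<and> a \<in> cone n (m(e := t)) Z)"
        using False by (simp add: M_def)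
      also have "\<dots> \<longleftrightarrow> (\<exists>t. q t \<and> g t = m e \<and> ?R \<and> a e = t)"
        using cone_upd2[of a n m e _ Z] False a by blast
      also have "\<dots> \<longleftrightarrow> q (a e) \<and> g (a e) = m e \<and> ?R" by blast
      finally show ?thesis using L False by auto
    qed
  qed
  have keyp: "(q (a e) \<and> a(e := g (a e)) \<in> cone n (fst p) (snd p)) \<longleftrightarrow> (\<exists>m'\<in>M p. a \<in> cone n m' (snd p))"
    if a: "a \<in> monomials n" for p a
    using key[OF a, of "fst p" "snd p"] by simp
  have disj: "m1 = m2" if h: "m1 \<in> M p" "m2 \<in> M p" "a \<in> cone n m1 (snd p)" "a \<in> cone n m2 (snd p)"
    for m1 m2 p a
  proof (cases "e \<in> snd p")
    case True then show ?thesis using h by (auto simp: M_def)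
  next
    case False
    then obtain t1 t2 where "m1 = (fst p)(e := t1)" "m2 = (fst p)(e := t2)"
      using h(1,2) by (auto simp: M_def)
    then show ?thesis using h(3,4) False by (auto simp: cone_upd2)
  qed
  have Dp: "finite D" "\<And>m Z. (m, Z) \<in> D \<Longrightarrow> Z \<subseteq> {..<n} \<and> m \<in> IB - JB \<and> cone n m Z \<subseteq> IB - JB"
    "\<And>a. a \<in> IB - JB \<Longrightarrow> \<exists>!p\<in>D. a \<in> cone n (fst p) (snd p)"
    using D unfolding stanley_decomp_def by auto
  have D'mem: "r \<in> D' \<longleftrightarrow> (\<exists>p\<in>D. snd r = snd p \<and> fst r \<in> M p)" for r
    unfolding D'_def by (cases r) auto
  have fin: "finite D'" unfolding D'_def using Dp(1) finM by auto
  have elems: "Z' \<subseteq> {..<n} \<and> m' \<in> IA - JA \<and> cone n m' Z' \<subseteq> IA - JA" if hyp: "(m', Z') \<in> D'" for m' Z'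
  proof -
    obtain p0 where p0: "p0 \<in> D" "Z' = snd p0" "m' \<in> M p0"
      using hyp D'mem[of "(m', Z')"] by auto
    define m where "m = fst p0"
    define Z where "Z = snd p0"
    have pp: "p0 = (m, Z)" unfolding m_def Z_def by simp
    have p: "(m, Z) \<in> D" "Z' = Z" "m' \<in> M (m, Z)" using p0 by (simp_all add: pp)
    have P: "Z \<subseteq> {..<n}" "m \<in> IB - JB" "cone n m Z \<subseteq> IB - JB" using Dp(2)[OF p(1)] by auto
    have mm: "m \<in> monomials n" using P(2) IB by auto
    obtain t where t: "m' = m(e := t)" using Mform[OF p(3)] by blast
    have m'm: "m' \<in> monomials n" using t upd_mon[OF e mm] by simp
    have sub: "cone n m' Z \<subseteq> IA - JA"
    proof
      fix a assume a: "a \<in> cone n m' Z"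
      have am: "a \<in> monomials n" using a by (auto simp: cone_def)
      have "\<exists>m''\<in>M (m, Z). a \<in> cone n m'' Z" using a p(3) by blast
      then have "q (a e) \<and> a(e := g (a e)) \<in> cone n m Z" by (rule iffD2[OF key[OF am, of m Z]])
      then have "a(e := g (a e)) \<in> IB - JB" using P(3) by blast
      then have "a \<in> {a \<in> monomials n. q (a e) \<and> a(e := g (a e)) \<in> IB - JB}"
        using am \<open>q (a e) \<and> _\<close> by simp
      then show "a \<in> IA - JA" using HS by simp
    qed
    have "m' \<in> cone n m' Z" using m'm by (auto simp: cone_def)
    then have "m' \<in> IA - JA" using sub by (rule subsetD[rotated])
    then show ?thesis using sub P(1) p(2) by simp
  qed
  have uniq: "\<exists>!r\<in>D'. a \<in> cone n (fst r) (snd r)" if a: "a \<in> IA - JA" for a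
  proof -
    have am: "a \<in> monomials n" and qa: "q (a e)" and pa: "a(e := g (a e)) \<in> IB - JB"
      using a HS by auto
    obtain p where p: "p \<in> D" "a(e := g (a e)) \<in> cone n (fst p) (snd p)"
      using Dp(3)[OF pa] by blast
    obtain m' where m': "m' \<in> M p" "a \<in> cone n m' (snd p)"
      using iffD1[OF keyp[OF am, of p]] p qa by blast
    have ex: "(m', snd p) \<in> D'" using m' p D'mem by auto
    have un: "r1 = r2" if u: "r1 \<in> D'" "a \<in> cone n (fst r1) (snd r1)"
      "r2 \<in> D'" "a \<in> cone n (fst r2) (snd r2)" for r1 r2
    proof -
      obtain p1 where p1: "p1 \<in> D" "snd r1 = snd p1" "fst r1 \<in> M p1" using u(1) D'mem by blast
      obtain p2 where p2: "p2 \<in> D" "snd r2 = snd p2" "fst r2 \<in> M p2" using u(3) D'mem by blast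
      have c1: "a(e := g (a e)) \<in> cone n (fst p1) (snd p1)"
        using iffD2[OF keyp[OF am, of p1]] p1 u(2) by (metis conjunct2)
      have c2: "a(e := g (a e)) \<in> cone n (fst p2) (snd p2)"
        using iffD2[OF keyp[OF am, of p2]] p2 u(4) by (metis conjunct2)
      have "p1 = p2" using ex1_uniq[OF Dp(3)[OF pa] p1(1) c1 p2(1) c2] .
      then have "fst r1 = fst r2" using disj[of "fst r1" p1 "fst r2" a] p1 p2 u(2,4) by simp
      then show ?thesis using p1 p2 \<open>p1 = p2\<close> by (simp add: prod_eq_iff)
    qed
    show ?thesis using ex m' un by (intro ex1I[of _ "(m', snd p)"]) auto
  qed
  have dec: "stanley_decomp n IA JA D'"
    unfolding stanley_decomp_def using fin elems uniq by auto
  have D'ne: "D' \<noteq> {}" using ne uniq by blast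
  have "stanley_depth_of D \<le> stanley_depth_of D'"
    unfolding stanley_depth_of_def
  proof (rule Min.boundedI)
    show "finite ((\<lambda>p. card (snd p)) ` D')" using fin by simp
    show "(\<lambda>p. card (snd p)) ` D' \<noteq> {}" using D'ne by simp
    fix x assume "x \<in> (\<lambda>p. card (snd p)) ` D'"
    then obtain r where r: "r \<in> D'" "x = card (snd r)" by blast
    then obtain p where "p \<in> D" "snd r = snd p" using D'mem by blast
    then show "Min ((\<lambda>p. card (snd p)) ` D) \<le> x" using r Dp(1) by (auto intro: Min_le)
  qed
  then show ?thesis using dec by blast
qed

lemma decomp_snd:
  assumes "stanley_decomp n I J D" "p \<in> D"
  shows "snd p \<subseteq> {..<n}"
proof -
  have "\<forall>(m, Z)\<in>D. Z \<subseteq> {..<n} \<and> m \<in> I - J \<and> cone n m Z \<subseteq> I - J"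
    using assms(1) unfolding stanley_decomp_def by (elim conjE)
  then have "case p of (m, Z) \<Rightarrow> Z \<subseteq> {..<n} \<and> m \<in> I - J \<and> cone n m Z \<subseteq> I - J"
    using assms(2) by (rule bspec)
  then show ?thesis by (cases p) simp
qed

lemma sdepth_set_finite: "finite {stanley_depth_of D | D. stanley_decomp n I J D}"
proof -
  have "{stanley_depth_of D | D. stanley_decomp n I J D} \<subseteq> insert (Min ({}::nat set)) {..n}"
  proof
    fix x assume "x \<in> {stanley_depth_of D | D. stanley_decomp n I J D}"
    then obtain D where D: "x = stanley_depth_of D" "stanley_decomp n I J D" by blast
    show "x \<in> insert (Min ({}::nat set)) {..n}"
    proof (cases "D = {}")
      case True then show ?thesis using D by (simp add: stanley_depth_of_def)
    next
      case False
      have fin: "finite D" using D(2) by (simp add: stanley_decomp_def)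
      have "x \<in> (\<lambda>p. card (snd p)) ` D" unfolding D(1) stanley_depth_of_def
        using fin False by (intro Min_in) auto
      then obtain p where p: "p \<in> D" "x = card (snd p)" by blast
      have "snd p \<subseteq> {..<n}" using decomp_snd[OF D(2) p(1)] .
      then have "card (snd p) \<le> n" using card_mono[of "{..<n}" "snd p"] by simp
      then show ?thesis using p by simp
    qed
  qed
  then show ?thesis by (rule finite_subset) simp
qed

lemma sdepth_eq:
  assumes A: "\<And>D. stanley_decomp n I1 J1 D \<Longrightarrow> \<exists>D'. stanley_decomp n I2 J2 D' \<and> stanley_depth_of D \<le> stanley_depth_of D'"
    and B: "\<And>D. stanley_decomp n I2 J2 D \<Longrightarrow> \<exists>D'. stanley_decomp n I1 J1 D' \<and> stanley_depth_of D \<le> stanley_depth_of D'"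
  shows "sdepth n I1 J1 = sdepth n I2 J2"
proof -
  let ?S1 = "{stanley_depth_of D | D. stanley_decomp n I1 J1 D}"
  let ?S2 = "{stanley_depth_of D | D. stanley_decomp n I2 J2 D}"
  have f1: "finite ?S1" and f2: "finite ?S2" by (rule sdepth_set_finite)+
  show ?thesis
  proof (cases "?S1 = {}")
    case True
    then have "?S2 = {}" using B by blast
    then show ?thesis using True by (simp add: sdepth_def)
  next
    case False
    then have ne2: "?S2 \<noteq> {}" using A by blast
    have "Max ?S1 \<le> Max ?S2"
    proof -
      have "Max ?S1 \<in> ?S1" using f1 False by (rule Max_in)
      then obtain D where "Max ?S1 = stanley_depth_of D" "stanley_decomp n I1 J1 D" by blast
      then obtain D' where "stanley_decomp n I2 J2 D'" "Max ?S1 \<le> stanley_depth_of D'" using A by metis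
      moreover have "stanley_depth_of D' \<le> Max ?S2"
        by (rule Max_ge[OF f2]) (use \<open>stanley_decomp n I2 J2 D'\<close> in blast)
      ultimately show ?thesis by simp
    qed
    moreover have "Max ?S2 \<le> Max ?S1"
    proof -
      have "Max ?S2 \<in> ?S2" using f2 ne2 by (rule Max_in)
      then obtain D where "Max ?S2 = stanley_depth_of D" "stanley_decomp n I2 J2 D" by blast
      then obtain D' where "stanley_decomp n I1 J1 D'" "Max ?S2 \<le> stanley_depth_of D'" using B by metis
      moreover have "stanley_depth_of D' \<le> Max ?S1"
        by (rule Max_ge[OF f1]) (use \<open>stanley_decomp n I1 J1 D'\<close> in blast)
      ultimately show ?thesis by simp
    qed
    ultimately show ?thesis by (simp add: sdepth_def)
  qed
qed

theorem proposition5p1: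
  fixes n k :: nat and I J :: "(nat \<Rightarrow> nat) set"
  assumes "n \<ge> 1"
    and "monomial_ideal n I" and "monomial_ideal n J"
    and "J \<subset> I"
  shows "sdepth n I J = sdepth n (shift_ideal n k I) (shift_ideal n k J)"
proof -
  let ?e = "n - 1"
  have e: "?e < n" using assms(1) by simp
  have Im: "I \<subseteq> monomials n" using assms(2) by (simp add: monomial_ideal_def)
  have I'm: "shift_ideal n k I \<subseteq> monomials n" by (auto simp: shift_ideal_def mon_ideal_gen_def)
  have ne: "I - J \<noteq> {}" using assms(4) by blast
  have S1: "shift_ideal n k I - shift_ideal n k J =
    {a \<in> monomials n. qd k (a ?e) \<and> a(?e := gdown k (a ?e)) \<in> I - J}"
    using char1[OF assms(2,1)] char1[OF assms(3,1)] I'm by blast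
  have S2: "I - J = {a \<in> monomials n. True \<and> a(?e := gup k (a ?e)) \<in> shift_ideal n k I - shift_ideal n k J}"
    using char2[OF assms(2,1)] char2[OF assms(3,1)] Im by blast
  have ne2: "shift_ideal n k I - shift_ideal n k J \<noteq> {}"
  proof -
    obtain a where a: "a \<in> I - J" using ne by blast
    then have "a(?e := gup k (a ?e)) \<in> shift_ideal n k I - shift_ideal n k J" using S2 by blast
    then show ?thesis by blast
  qed
  have up1: "\<exists>t. \<forall>x. (qd k x \<and> s \<le> gdown k x) \<longleftrightarrow> t \<le> x" for s
    by (rule exI[of _ "if s < k then s else s + 1"]) (auto simp: qd_def gdown_def)
  have fin1: "finite {x. qd k x \<and> gdown k x = s}" for s
    by (rule finite_subset[of _ "{..s+1}"]) (auto simp: gdown_def split: if_splits)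
  have up2: "\<exists>t. \<forall>x. (True \<and> s \<le> gup k x) \<longleftrightarrow> t \<le> x" for s
    by (rule exI[of _ "if s \<le> k then s else s - 1"]) (auto simp: gup_def)
  have fin2: "finite {x. True \<and> gup k x = s}" for s
    by (rule finite_subset[of _ "{..s}"]) (auto simp: gup_def split: if_splits)
  show ?thesis
  proof (rule sdepth_eq)
    fix D assume "stanley_decomp n I J D"
    then show "\<exists>D'. stanley_decomp n (shift_ideal n k I) (shift_ideal n k J) D' \<and> stanley_depth_of D \<le> stanley_depth_of D'"
      using transfer[OF e Im S1 ne2 up1 fin1] by blast
  next
    fix D assume "stanley_decomp n (shift_ideal n k I) (shift_ideal n k J) D"
    then show "\<exists>D'. stanley_decomp n I J D' \<and> stanley_depth_of D \<le> stanley_depth_of D'"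
      using transfer[OF e I'm S2 ne up2 fin2] by blast
  qed
qed

end
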